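(* Let $L>0$, let $a$ satisfy (H_a), $g\in L^2(0,L)$, and let $\phi$ satisfy (H_φ) with $\phi(0)=+\infty$. Assume moreover that $\int_0^{\delta}\phi(t)\,dt=+\infty$ and $\int_{-\delta}^0\phi(t)\,dt=+\infty$ for every $\delta\in(0,1)$. Then problem (P) has no weak solution.
   Context: (H_a): $a\in L^\infty(0,L)$ and there are constants $0<\alpha<\beta$ with $\alpha\le a(x)\le\beta$ for a.e. $x\in(0,L)$. (H_φ): $\phi:\mathbb{R}\to\mathbb{R}\cup\{+\infty\}$ is continuous when $\mathbb{R}\cup\{+\infty\}$ carries its usual topology, and $\phi(s)<+\infty$ for every $s\neq0$ (since $\phi(0)=+\infty$, $\phi\ge0$ near $0$, so the integrals make sense). A weak solution of problem (P) with data $(a,g,\phi)$ is a function $u$ with $u\in H^1_0(0,L)$, $\phi(u)\in L^2(0,L)$, and $-\frac{d}{dx}(a\frac{du}{dx})=-\frac{d\phi(u)}{dx}-\frac{dg}{dx}$ in $\mathcal D'(0,L)$. *)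

theory Defs
  imports "HOL-Analysis.Analysis"
begin

definition L2_on :: "real \<Rightarrow> (real \<Rightarrow> real) \<Rightarrow> bool" where
  "L2_on L f \<longleftrightarrow> f \<in> borel_measurable (lebesgue_on {0<..<L})
      \<and> integrable (lebesgue_on {0<..<L}) (\<lambda>x. (f x)^2)"

definition test_fun :: "real \<Rightarrow> (real \<Rightarrow> real) \<Rightarrow> bool" where
  "test_fun L \<psi> \<longleftrightarrow> (\<forall>n x. ((deriv ^^ n) \<psi>) differentiable (at x))
      \<and> (\<exists>c d. 0 < c \<and> c \<le> d \<and> d < L \<and> (\<forall>x. x \<notin> {c..d} \<longrightarrow> \<psi> x = 0))"

text \<open>u in H^1_0(0,L) with weak derivative u': u is (a.e.) the primitive of the
  L^2 function u' vanishing at 0, and u(L) = 0.\<close>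
definition H10_with_deriv :: "real \<Rightarrow> (real \<Rightarrow> real) \<Rightarrow> (real \<Rightarrow> real) \<Rightarrow> bool" where
  "H10_with_deriv L u u' \<longleftrightarrow> L2_on L u'
      \<and> (AE x in lebesgue_on {0<..<L}. u x = integral\<^sup>L (lebesgue_on {0..x}) u')
      \<and> integral\<^sup>L (lebesgue_on {0..L}) u' = 0"

text \<open>Weak solution of (P):  -(a u')' = -(phi(u))' - g'  in D'(0,L).\<close>
definition weak_solution ::
  "real \<Rightarrow> (real \<Rightarrow> real) \<Rightarrow> (real \<Rightarrow> real) \<Rightarrow> (real \<Rightarrow> ereal) \<Rightarrow> (real \<Rightarrow> real) \<Rightarrow> bool" where
  "weak_solution L a g \<phi> u \<longleftrightarrow>
     (\<exists>u'. H10_with_deriv L u u'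
        \<and> (AE x in lebesgue_on {0<..<L}. \<phi> (u x) \<noteq> \<infinity>)
        \<and> L2_on L (\<lambda>x. real_of_ereal (\<phi> (u x)))
        \<and> (\<forall>\<psi>. test_fun L \<psi> \<longrightarrow>
             (\<integral>x. a x * u' x * deriv \<psi> x \<partial>lebesgue_on {0<..<L})
           = (\<integral>x. (real_of_ereal (\<phi> (u x)) + g x) * deriv \<psi> x \<partial>lebesgue_on {0<..<L})))"

end

theory Submission imports Defs begin

lemma core:
  fixes U v f :: "real \<Rightarrow> real" and x1 x0 c :: real
  assumes x10: "x1 < x0"
    and Ucont: "continuous_on {x1..x0} U"
    and U1: "U x1 = 0" and Upos: "\<And>x. x1 < x \<Longrightarrow> x \<le> x0 \<Longrightarrow> 0 < U x"
    and vint: "v absolutely_integrable_on {x1..x0}"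
    and Udiff: "\<And>x y. x1 \<le> x \<Longrightarrow> x \<le> y \<Longrightarrow> y \<le> x0 \<Longrightarrow> U y - U x = integral {x..y} v"
    and fcont: "continuous_on {0<..} f"
    and hint: "(\<lambda>t. \<bar>f (U t)\<bar> * \<bar>v t\<bar>) integrable_on {x1..x0}"
    and c: "0 < c"
    and dv: "filterlim (\<lambda>e. integral {e..c} f) at_top (at_right 0)"
  shows False
proof -
  define h where "h t = (\<bar>f (U t)\<bar> + 2) * \<bar>v t\<bar>" for t
  have absv: "(\<lambda>t. \<bar>v t\<bar>) integrable_on {x1..x0}"
    using vint by (simp add: absolutely_integrable_on_def)
  have vi: "v integrable_on {x1..x0}"
    using vint by (simp add: absolutely_integrable_on_def)
  have heq: "h = (\<lambda>t. \<bar>f (U t)\<bar> * \<bar>v t\<bar> + 2 * \<bar>v t\<bar>)"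
    by (auto simp: h_def fun_eq_iff algebra_simps)
  have hint2: "h integrable_on {x1..x0}"
    unfolding heq by (intro integrable_add hint integrable_on_mult_right absv)
  have hnn: "\<And>t. 0 \<le> h t" by (simp add: h_def)
  define K where "K = integral {x1..x0} h"
  define P where "P s = (if c \<le> s then integral {c..s} f else - integral {s..c} f)" for s
  have fint: "f integrable_on {p..q}" if "0 < p" for p q
    by (rule integrable_continuous_interval, rule continuous_on_subset[OF fcont]) (use that in auto)
  have Pdiff: "P q - P p = integral {p..q} f" if "0 < p" "p \<le> q" for p q
  proof (cases "c \<le> p")
    case True
    then show ?thesis using Henstock_Kurzweil_Integration.integral_combine[where a="c" and c="p" and b="q" and f="f"] fint[of c q] that c
      by (simp add: P_def)
  next
    case False
    show ?thesis
    proof (cases "c \<le> q")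
      case True
      then show ?thesis using False Henstock_Kurzweil_Integration.integral_combine[where a="p" and c="c" and b="q" and f="f"] fint[of p q] that
        by (simp add: P_def)
    next
      case F2: False
      then show ?thesis using False Henstock_Kurzweil_Integration.integral_combine[where a="p" and c="q" and b="c" and f="f"] fint[of p c] that
        by (simp add: P_def)
    qed
  qed
  have Pbound: "\<bar>P q - P p\<bar> \<le> B * (q - p)"
    if "0 < p" "p \<le> q" "\<And>s. p \<le> s \<Longrightarrow> s \<le> q \<Longrightarrow> \<bar>f s\<bar> \<le> B" for p q B
  proof -
    have B0: "0 \<le> B" using that(3)[of p] that(2) by force
    have "norm (integral {p..q} f) \<le> B * measure lborel {p..q}"
      by (rule has_integral_bound_real[where S="{}"])
         (use B0 fint[OF that(1)] that in auto)
    then show ?thesis using Pdiff[OF that(1,2)] that(2) by simp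
  qed
  have key: "P (U x0) - K \<le> P (U a)" if a: "x1 < a" "a < x0" for a
  proof -
    define g where "g t = \<bar>f (U t)\<bar>" for t
    have Uc: "continuous_on {a..x0} U"
      by (rule continuous_on_subset[OF Ucont]) (use a in auto)
    have gc: "continuous_on {a..x0} g"
      unfolding g_def
      by (intro continuous_on_rabs continuous_on_compose2[OF fcont Uc]) (use a Upos in force)
    have "uniformly_continuous_on {a..x0} g"
      by (rule compact_uniformly_continuous[OF gc]) simp
    then obtain d where d: "d > 0"
      and dd: "\<And>s t. s \<in> {a..x0} \<Longrightarrow> t \<in> {a..x0} \<Longrightarrow> dist t s < d \<Longrightarrow> dist (g t) (g s) < 1"
      unfolding uniformly_continuous_on_def by (meson zero_less_one)
    have local: "\<bar>P (U y) - P (U x)\<bar> \<le> integral {x..y} h"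
      if xy: "a \<le> x" "x \<le> y" "y \<le> x0" "y - x < d" for x y
    proof -
      define B where "B = g x + 1"
      have gt: "g t \<le> B" if "x \<le> t" "t \<le> y" for t
        using dd[of x t] xy that by (auto simp: B_def dist_real_def)
      have Ux: "0 < U x" "0 < U y" using Upos a xy by auto
      have Ucxy: "continuous_on {x..y} U"
        by (rule continuous_on_subset[OF Ucont]) (use a xy in auto)
      have fs: "\<bar>f s\<bar> \<le> B" if "min (U x) (U y) \<le> s" "s \<le> max (U x) (U y)" for s
      proof -
        have "\<exists>t. x \<le> t \<and> t \<le> y \<and> U t = s"
        proof (cases "U x \<le> U y")
          case True
          then show ?thesis using IVT'[of U x s y] Ucxy that xy by auto
        next
          case False
          then show ?thesis using IVT2'[of U y s x] Ucxy that xy by auto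
        qed
        then obtain t where "x \<le> t" "t \<le> y" "U t = s" by blast
        then show ?thesis using gt[of t] by (auto simp: g_def)
      qed
      have PB: "\<bar>P (U y) - P (U x)\<bar> \<le> B * \<bar>U y - U x\<bar>"
      proof (cases "U x \<le> U y")
        case True
        then show ?thesis using Pbound[of "U x" "U y" B] fs Ux by auto
      next
        case False
        then show ?thesis using Pbound[of "U y" "U x" B] fs Ux
          by (auto simp: abs_minus_commute)
      qed
      have vxy: "v integrable_on {x..y}" "(\<lambda>t. \<bar>v t\<bar>) integrable_on {x..y}"
        "h integrable_on {x..y}"
        using integrable_on_subinterval[OF vi, of x y] integrable_on_subinterval[OF absv, of x y]
          integrable_on_subinterval[OF hint2, of x y] a xy by auto
      have "\<bar>U y - U x\<bar> \<le> integral {x..y} (\<lambda>t. \<bar>v t\<bar>)"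
        using Udiff[of x y] a xy integral_norm_bound_integral[OF vxy(1,2)] by auto
      then have "B * \<bar>U y - U x\<bar> \<le> B * integral {x..y} (\<lambda>t. \<bar>v t\<bar>)"
        by (rule mult_left_mono) (simp add: B_def g_def)
      also have "\<dots> = integral {x..y} (\<lambda>t. B * \<bar>v t\<bar>)"
        by simp
      also have "\<dots> \<le> integral {x..y} h"
      proof (rule integral_le)
        show "(\<lambda>t. B * \<bar>v t\<bar>) integrable_on {x..y}"
          using vxy(2) by (rule integrable_on_mult_right)
        show "h integrable_on {x..y}" by (rule vxy(3))
        fix t assume "t \<in> {x..y}"
        then have "B \<le> g t + 2" using dd[of x t] xy by (auto simp: B_def dist_real_def)
        then show "B * \<bar>v t\<bar> \<le> h t" unfolding h_def g_def
          by (simp add: mult_right_mono)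
      qed
      finally show ?thesis using PB by linarith
    qed
    define Q where "Q x = integral {a..x} h - P (U x)" for x
    have Qloc: "Q x \<le> Q y" if xy: "a \<le> x" "x \<le> y" "y \<le> x0" "y - x < d" for x y
    proof -
      have "h integrable_on {a..y}"
        using integrable_on_subinterval[OF hint2, of a y] a xy by auto
      then have "integral {a..x} h + integral {x..y} h = integral {a..y} h"
        using Henstock_Kurzweil_Integration.integral_combine[where a="a" and c="x" and b="y" and f="h"] xy by auto
      then show ?thesis using local[OF xy] by (simp add: Q_def)
    qed
    have ind: "\<forall>x. a \<le> x \<longrightarrow> x \<le> x0 \<longrightarrow> x \<le> a + real n * (d/2) \<longrightarrow> Q a \<le> Q x" for n :: nat
    proof (induction n)
      case 0
      then show ?case by auto
    next
      case (Suc n)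
      show ?case
      proof (intro allI impI)
        fix x assume x: "a \<le> x" "x \<le> x0" "x \<le> a + real (Suc n) * (d/2)"
        show "Q a \<le> Q x"
        proof (cases "x \<le> a + real n * (d/2)")
          case True
          then show ?thesis using Suc x by auto
        next
          case False
          show ?thesis
          proof (cases "x - d/2 \<le> a")
            case True
            then show ?thesis using Qloc[of a x] x d by auto
          next
            case F2: False
            have "x - d/2 \<le> a + real n * (d/2)" using x(3) by (simp add: field_simps)
            then have "Q a \<le> Q (x - d/2)" using Suc.IH[rule_format, of "x - d/2"] F2 x d by auto
            also have "\<dots> \<le> Q x" using Qloc[of "x - d/2" x] x F2 d by (auto simp: algebra_simps)
            finally show ?thesis .
          qed
        qed
      qed
    qed
    obtain n :: nat where n: "(x0 - a) / (d/2) \<le> real n"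
      using real_arch_simple by blast
    then have "x0 \<le> a + real n * (d/2)" using d by (simp add: field_simps)
    then have "Q a \<le> Q x0" using ind[of n] a by auto
    moreover have "integral {a..x0} h \<le> K"
      unfolding K_def
      by (rule integral_subset_le) (use a integrable_on_subinterval[OF hint2, of a x0] hint2 hnn in auto)
    ultimately show ?thesis by (simp add: Q_def)
  qed
  have Ut: "(U \<longlongrightarrow> 0) (at_right x1)"
  proof -
    have "(U \<longlongrightarrow> U x1) (at x1 within {x1..x0})"
      using Ucont x10 by (simp add: continuous_on_def)
    then show ?thesis using at_within_Icc_at_right[OF x10] U1 by simp
  qed
  have ev1: "eventually (\<lambda>x. x1 < x \<and> x < x0) (at_right x1)"
    by (rule eventually_at_rightI[OF _ x10]) auto
  have "filterlim U (at_right 0) (at_right x1)"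
    by (rule tendsto_imp_filterlim_at_right[OF Ut]) (use ev1 Upos in \<open>auto elim: eventually_mono\<close>)
  then have "filterlim (\<lambda>x. integral {U x..c} f) at_top (at_right x1)"
    by (rule filterlim_compose[OF dv])
  then have ev2: "eventually (\<lambda>x. integral {U x..c} f > K - P (U x0)) (at_right x1)"
    by (simp add: filterlim_at_top_dense)
  have ev3: "eventually (\<lambda>x. U x < c) (at_right x1)"
    using order_tendstoD(2)[OF Ut c] .
  have "eventually (\<lambda>x. (x1 < x \<and> x < x0) \<and> integral {U x..c} f > K - P (U x0) \<and> U x < c) (at_right x1)"
    using ev1 ev2 ev3 by eventually_elim auto
  then obtain a where a: "x1 < a" "a < x0" "integral {U a..c} f > K - P (U x0)" "U a < c"
    using eventually_happens[of _ "at_right x1"] by auto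
  have "P (U a) = - integral {U a..c} f" using a(4) by (simp add: P_def)
  then show False using key[OF a(1,2)] a(3) by linarith
qed


theorem mainTheorem6:
  fixes L \<alpha> \<beta> :: real and a g :: "real \<Rightarrow> real" and \<phi> :: "real \<Rightarrow> ereal"
  assumes "L > 0"
    and "a \<in> borel_measurable (lebesgue_on {0<..<L})"
    and "0 < \<alpha>" "\<alpha> < \<beta>"
    and "AE x in lebesgue_on {0<..<L}. \<alpha> \<le> a x \<and> a x \<le> \<beta>"
    and "L2_on L g"
    and "continuous_on UNIV \<phi>"
    and "\<And>s. \<phi> s \<noteq> -\<infinity>"
    and "\<And>s. s \<noteq> 0 \<Longrightarrow> \<phi> s \<noteq> \<infinity>"
    and "\<phi> 0 = \<infinity>"
    and "\<And>\<delta>. 0 < \<delta> \<Longrightarrow> \<delta> < 1 \<Longrightarrow>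
           filterlim (\<lambda>\<epsilon>. integral {\<epsilon>..\<delta>} (\<lambda>t. real_of_ereal (\<phi> t))) at_top (at_right 0)"
    and "\<And>\<delta>. 0 < \<delta> \<Longrightarrow> \<delta> < 1 \<Longrightarrow>
           filterlim (\<lambda>\<epsilon>. integral {-\<delta>..-\<epsilon>} (\<lambda>t. real_of_ereal (\<phi> t))) at_top (at_right 0)"
  shows "\<not> (\<exists>u. weak_solution L a g \<phi> u)"
proof
  assume "\<exists>u. weak_solution L a g \<phi> u"
  then obtain u u' where H: "H10_with_deriv L u u'"
    and fin: "AE x in lebesgue_on {0<..<L}. \<phi> (u x) \<noteq> \<infinity>"
    and L2f: "L2_on L (\<lambda>x. real_of_ereal (\<phi> (u x)))"
    unfolding weak_solution_def by blast
  note L0 = assms(1)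
  define M where "M = lebesgue_on {0<..<L}"
  define F where "F s = real_of_ereal (\<phi> s)" for s
  have vmeas: "u' \<in> borel_measurable M" and vsq: "integrable M (\<lambda>x. (u' x)^2)"
    and ae: "AE x in M. u x = integral\<^sup>L (lebesgue_on {0..x}) u'"
    unfolding M_def using H by (auto simp: H10_with_deriv_def L2_on_def)
  have Fumeas: "(\<lambda>x. F (u x)) \<in> borel_measurable M"
    and Fusq: "integrable M (\<lambda>x. (F (u x))^2)"
    unfolding M_def F_def using L2f by (auto simp: L2_on_def)
  have fm: "finite_measure M" unfolding M_def by (rule finite_measure_lebesgue_on) simp
  have vL: "integrable M u'"
    using finite_measure.square_integrable_imp_integrable[OF fm vmeas vsq] .
  have vabs0: "u' absolutely_integrable_on {0<..<L}"
    using vL unfolding M_def set_integrable_def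
    by (subst (asm) integrable_restrict_space) auto
  have vabs: "u' absolutely_integrable_on {0..L}"
    using vabs0 absolutely_integrable_on_open_interval[where f=u' and a=0 and b=L] by simp
  have vint: "u' integrable_on {0..L}"
    using vabs by (simp add: absolutely_integrable_on_def)
  define W where "W x = integral {0..x} u'" for x
  have Weq: "integral\<^sup>L (lebesgue_on {0..x}) u' = W x" if "0 \<le> x" "x \<le> L" for x
  proof -
    have "u' absolutely_integrable_on {0..x}"
      using absolutely_integrable_on_subcbox[OF vabs, where a=0 and b=x] that by auto
    then have "integrable (lebesgue_on {0..x}) u'"
      by (rule absolutely_integrable_imp_integrable) simp
    then have "(u' has_integral integral\<^sup>L (lebesgue_on {0..x}) u') {0..x}"
      by (rule has_integral_integral_lebesgue_on) simp
    then show ?thesis unfolding W_def by (rule integral_unique[symmetric])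
  qed
  have spM: "space M = {0<..<L}" by (simp add: M_def)
  have ae': "AE x in M. u x = W x"
  proof -
    have "AE x in M. x \<in> {0<..<L}" by (rule AE_I2) (simp add: spM)
    then show ?thesis using ae by eventually_elim (use Weq in auto)
  qed
  have Wcont: "continuous_on {0..L} W"
    unfolding W_def by (rule indefinite_integral_continuous_1[OF vint])
  have W0: "W 0 = 0" by (simp add: W_def)
  have Wdiff: "W y - W x = integral {x..y} u'" if "0 \<le> x" "x \<le> y" "y \<le> L" for x y
  proof -
    have "u' integrable_on {0..y}" using integrable_on_subinterval[OF vint, of 0 y] that by auto
    then show ?thesis unfolding W_def
      using Henstock_Kurzweil_Integration.integral_combine[where a=0 and c=x and b=y and f=u'] that by auto
  qed
  have aeW: "AE x in M. W x \<noteq> 0"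
    using ae' fin[folded M_def] by eventually_elim (use assms(10) in auto)
  have "\<exists>x0. 0 < x0 \<and> x0 < L \<and> W x0 \<noteq> 0"
  proof (rule ccontr)
    assume nx: "\<not> ?thesis"
    have "AE x in M. x \<in> {0<..<L}" by (rule AE_I2) (simp add: spM)
    then have "AE x in M. False" using aeW
      by eventually_elim (use nx in auto)
    then have "emeasure M (space M) = 0"
      using ae_filter_eq_bot_iff trivial_limit_def by metis
    moreover have "emeasure M (space M) = ennreal L"
      unfolding spM M_def using L0
      by (simp add: emeasure_restrict_space)
    ultimately show False using L0 by simp
  qed
  then obtain x0 where x0: "0 < x0" "x0 < L" "W x0 \<noteq> 0" by blast
  define S where "S = {x \<in> {0..x0}. W x = 0}"
  have Sc: "closed S" unfolding S_def
    by (rule continuous_closed_preimage_constant)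
       (use continuous_on_subset[OF Wcont, of "{0..x0}"] x0 in auto)
  have S0: "0 \<in> S" using x0 W0 by (simp add: S_def)
  have Sb: "bdd_above S" unfolding S_def by (rule bdd_aboveI[of _ x0]) auto
  define x1 where "x1 = Sup S"
  have x1S: "x1 \<in> S" unfolding x1_def using closed_contains_Sup[OF _ Sb Sc] S0 by blast
  have x1: "0 \<le> x1" "x1 < x0" "W x1 = 0"
    using x1S x0 unfolding S_def by (auto simp: order.order_iff_strict)
  have Wnz: "W x \<noteq> 0" if "x1 < x" "x \<le> x0" for x
  proof
    assume "W x = 0"
    then have "x \<in> S" using that x1 by (simp add: S_def)
    then have "x \<le> x1" unfolding x1_def using Sb by (rule cSup_upper)
    then show False using that by simp
  qed
  have Wc1: "continuous_on {x1..x0} W"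
    by (rule continuous_on_subset[OF Wcont]) (use x0 x1 in auto)
  have vabs1: "u' absolutely_integrable_on {x1..x0}"
    using absolutely_integrable_on_subcbox[OF vabs, where a=x1 and b=x0] x0 x1 by auto
  have Wd1: "W y - W x = integral {x..y} u'" if "x1 \<le> x" "x \<le> y" "y \<le> x0" for x y
    using Wdiff[of x y] that x0 x1 by auto
  have \<phi>m: "\<phi> \<in> borel_measurable borel"
    by (rule borel_measurable_continuous_onI[OF assms(7)])
  have Wm: "W \<in> borel_measurable M"
    unfolding M_def
    by (rule continuous_imp_measurable_on_sets_lebesgue)
       (auto intro: continuous_on_subset[OF Wcont])
  have FWm: "(\<lambda>x. F (W x)) \<in> borel_measurable M"
    unfolding F_def by (intro borel_measurable_real_of_ereal measurable_compose[OF Wm \<phi>m])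
  have hu: "integrable M (\<lambda>t. \<bar>F (u t)\<bar> * \<bar>u' t\<bar>)"
  proof (rule Bochner_Integration.integrable_bound[of M "\<lambda>x. (F (u x))^2 + (u' x)^2"])
    show "integrable M (\<lambda>x. (F (u x))^2 + (u' x)^2)" using Fusq vsq by simp
    show "(\<lambda>t. \<bar>F (u t)\<bar> * \<bar>u' t\<bar>) \<in> borel_measurable M" using Fumeas vmeas by (intro borel_measurable_times borel_measurable_abs)
    show "AE x in M. norm (\<bar>F (u x)\<bar> * \<bar>u' x\<bar>) \<le> norm ((F (u x))^2 + (u' x)^2)"
    proof (rule AE_I2)
      fix x
      define p where "p = \<bar>F (u x)\<bar>"
      define q where "q = \<bar>u' x\<bar>"
      have pq: "0 \<le> p" "0 \<le> q" by (auto simp: p_def q_def)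
      have "0 \<le> (p - q)^2" by simp
      then have "2 * (p * q) \<le> p^2 + q^2" by (simp add: power2_eq_square algebra_simps)
      moreover have "0 \<le> p * q" using pq by simp
      moreover have "p^2 = (F (u x))^2" "q^2 = (u' x)^2" by (simp_all add: p_def q_def)
      ultimately show "norm (\<bar>F (u x)\<bar> * \<bar>u' x\<bar>) \<le> norm ((F (u x))^2 + (u' x)^2)"
        unfolding p_def[symmetric] q_def[symmetric] by simp
    qed
  qed
  have hW: "integrable M (\<lambda>t. \<bar>F (W t)\<bar> * \<bar>u' t\<bar>)"
  proof (rule integrable_cong_AE_imp[OF hu])
    show "(\<lambda>t. \<bar>F (W t)\<bar> * \<bar>u' t\<bar>) \<in> borel_measurable M"
      using FWm vmeas by (intro borel_measurable_times borel_measurable_abs)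
    show "AE x in M. \<bar>F (u x)\<bar> * \<bar>u' x\<bar> = \<bar>F (W x)\<bar> * \<bar>u' x\<bar>"
      using ae' by eventually_elim simp
  qed
  have hW1: "(\<lambda>t. \<bar>F (W t)\<bar> * \<bar>u' t\<bar>) integrable_on {x1..x0}"
  proof -
    have "(\<lambda>t. \<bar>F (W t)\<bar> * \<bar>u' t\<bar>) integrable_on {0<..<L}"
      using integrable_on_lebesgue_on[OF hW[unfolded M_def]] by simp
    then have "(\<lambda>t. \<bar>F (W t)\<bar> * \<bar>u' t\<bar>) integrable_on {0..L}"
      by (simp add: integrable_on_open_interval_real)
    then show ?thesis by (rule integrable_on_subinterval) (use x0 x1 in auto)
  qed
  have Feq: "F = (\<lambda>t. real_of_ereal (\<phi> t))" by (simp add: F_def fun_eq_iff)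
  have \<phi>fin: "\<bar>\<phi> s\<bar> \<noteq> \<infinity>" if "s \<noteq> 0" for s
    using assms(8,9)[of s] that by (cases "\<phi> s") auto
  have Fcont: "continuous_on A F" if "0 \<notin> A" for A
  proof -
    have "continuous_on A \<phi>" using continuous_on_subset[OF assms(7)] by blast
    then have "continuous_on A (real_of_ereal \<circ> \<phi>)"
      using continuous_on_iff_real[of A \<phi>] \<phi>fin that by metis
    then show ?thesis by (simp add: F_def o_def fun_eq_iff)
  qed
  have half: "0 < (1/2::real)" by simp
  show False
  proof (cases "W x0 > 0")
    case True
    have pos: "0 < W x" if xh: "x1 < x" "x \<le> x0" for x
    proof (rule ccontr)
      assume "\<not> 0 < W x"
      then have "W x \<le> 0" by simp
      then obtain t where "x \<le> t" "t \<le> x0" "W t = 0"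
        using IVT'[of W x 0 x0] True xh continuous_on_subset[OF Wc1, of "{x..x0}"] by auto
      then show False using Wnz[of t] xh by auto
    qed
    have Fc0: "continuous_on {0<..} F" by (rule Fcont) simp
    have dv1: "filterlim (\<lambda>e. integral {e..1/2} F) at_top (at_right 0)"
      using assms(11)[of "1/2"] unfolding Feq by simp
    show False
      by (rule core[OF x1(2) Wc1 x1(3) pos vabs1 Wd1 Fc0 hW1 half dv1])
  next
    case False
    then have neg0: "W x0 < 0" using x0 by auto
    have neg: "W x < 0" if xh: "x1 < x" "x \<le> x0" for x
    proof (rule ccontr)
      assume "\<not> W x < 0"
      then have "0 \<le> W x" by simp
      then obtain t where "x \<le> t" "t \<le> x0" "W t = 0"
        using IVT2'[of W x0 0 x] neg0 xh continuous_on_subset[OF Wc1, of "{x..x0}"] by auto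
      then show False using Wnz[of t] xh by auto
    qed
    have c1: "continuous_on {x1..x0} (\<lambda>x. - W x)" using Wc1 by (intro continuous_intros)
    have va: "(\<lambda>x. - u' x) absolutely_integrable_on {x1..x0}"
      using vabs1 by (simp add: absolutely_integrable_on_def integrable_neg)
    have fc: "continuous_on {0<..} (\<lambda>s. F (- s))"
      by (rule continuous_on_compose2[OF Fcont[of "{..<0}"]]) (auto intro: continuous_intros)
    have dv: "filterlim (\<lambda>e. integral {e..1/2} (\<lambda>s. F (- s))) at_top (at_right 0)"
    proof -
      have "integral {e..1/2} (\<lambda>s. F (- s)) = integral {-(1/2)..-e} F" for e
        using Henstock_Kurzweil_Integration.integral_reflect_real[of "-e" "-(1/2)" F] by simp
      then show ?thesis using assms(12)[of "1/2"] unfolding Feq by simp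
    qed
    have Wd2: "- W y - - W x = integral {x..y} (\<lambda>t. - u' t)" if "x1 \<le> x" "x \<le> y" "y \<le> x0" for x y
      using Wd1[OF that] by (simp add: integral_neg)
    have x1z: "- W x1 = 0" using x1 by simp
    have hW2: "(\<lambda>t. \<bar>F (- (- W t))\<bar> * \<bar>- u' t\<bar>) integrable_on {x1..x0}"
      using hW1 by simp
    have neg': "0 < - W x" if "x1 < x" "x \<le> x0" for x using neg[OF that] by simp
    show False
      by (rule core[OF x1(2) c1 x1z neg' va Wd2 fc hW2 half dv])
  qed
qed

end
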